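(* Let $G$ be a planar PCC graph, $\sigma$ a face with $|\sigma|=N\ge42$, and let $A_1,A_5,A_6,\mathcal T,C_1$ and $\tau_v$ ($v\in C_1$) be as in the context. Define $C_{15}=\{v\in C_1:\ \tau_v\text{ has vertices }v,v_1,v_2\text{ with }v_1\in A_1,\ v_2\in A_5\}$, $C_{16}=\{v\in C_1:\ \tau_v\text{ has vertices }v,v_1,v_2\text{ with }v_1\in A_1,\ v_2\in A_6\}$, and let $D$ be the set of vertices $v$ for which there exists $v'\in C_{16}$ adjacent to $v$ such that the two faces on either side of the edge $vv'$ have sizes $5$ and $6$. Then $C_1\cap D\subseteq C_{15}$.
   Context: $G$ is a finite simple connected graph 2-cell embedded in the sphere; $|\sigma|$ is the boundary walk length of face $\sigma$; $f(v)$ is the multiset of sizes of faces incident to $v$ (one per corner), in nondecreasing order; $K(v)=1-\frac{\deg(v)}{2}+\sum_{\sigma\in F(v)}\frac1{|\sigma|}$. A prism (resp. antiprism) of order $N$ is the planar graph with $2N$ vertices, two $N$-faces and $N$ quadrilaterals (resp. $2N$ triangles), each vertex incident to two quadrilaterals and one $N$-face (resp. three triangles and one $N$-face). A planar PCC graph is such a $G$ with $K(v)>0$, $\deg(v)\ge3$ for all $v$, not a prism or antiprism. Given the face $\sigma$ with $|\sigma|=N$: $A_1,A_5,A_6$ are the sets of vertices $v$ on the boundary of $\sigma$ with $f(v)=(3,3,3,N)$, $(3,5,N)$, $(3,6,N)$ respectively; $\mathcal T$ is the set of triangles whose vertex set is $\{v,v_1,v_2\}$ with $v_1,v_2\in A_1\cup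 A_5\cup A_6$; $C_1$ is the set of vertices not on the boundary of $\sigma$ lying on some triangle of $\mathcal T$. For each $v\in C_1$ there is a unique $\tau_v\in\mathcal T$ containing $v$. *)

theory Defs
  imports Complex_Main "HOL-Combinatorics.Combinatorics" "HOL-Library.Multiset"
begin

text \<open>Maps on the sphere are encoded as combinatorial maps (rotation systems):
 a finite set D of darts (half-edges), a fixed-point-free involution al
 (the other half of the same edge) and a permutation rot (rotation of the
 darts around their tail vertex). Vertices are rot-orbits, edges are
 al-orbits, faces are orbits of the face permutation rot o al; the length of
 the boundary walk of a face is the size of its orbit. The dart d lies on the
 face orbit (rot o al) d; the darts at a vertex correspond one-to-one with
 the corners at the vertex, the corner being in the face of that dart.\<close>

definition fperm :: "('d \<Rightarrow> 'd) \<Rightarrow> ('d \<Rightarrow> 'd) \<Rightarrow> 'd \<Rightarrow> 'd" where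
  "fperm al rot = rot \<circ> al"

definition vert_of :: "('d \<Rightarrow> 'd) \<Rightarrow> 'd \<Rightarrow> 'd set" where
  "vert_of rot d = orbit rot d"

definition face_of :: "('d \<Rightarrow> 'd) \<Rightarrow> ('d \<Rightarrow> 'd) \<Rightarrow> 'd \<Rightarrow> 'd set" where
  "face_of al rot d = orbit (fperm al rot) d"

definition verts :: "'d set \<Rightarrow> ('d \<Rightarrow> 'd) \<Rightarrow> 'd set set" where
  "verts D rot = vert_of rot ` D"

definition faces :: "'d set \<Rightarrow> ('d \<Rightarrow> 'd) \<Rightarrow> ('d \<Rightarrow> 'd) \<Rightarrow> 'd set set" where
  "faces D al rot = face_of al rot ` D"

definition sphere_map :: "'d set \<Rightarrow> ('d \<Rightarrow> 'd) \<Rightarrow> ('d \<Rightarrow> 'd) \<Rightarrow> bool" where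
  "sphere_map D al rot \<longleftrightarrow>
     finite D \<and> al permutes D \<and> rot permutes D \<and>
     (\<forall>d\<in>D. al (al d) = d \<and> al d \<noteq> d) \<and>
     \<comment> \<open>connected\<close>
     (\<forall>d\<in>D. \<forall>d'\<in>D. (d, d') \<in> ({(x, al x) | x. x \<in> D} \<union> {(x, rot x) | x. x \<in> D})\<^sup>*) \<and>
     \<comment> \<open>no loops\<close>
     (\<forall>d\<in>D. al d \<notin> vert_of rot d) \<and>
     \<comment> \<open>no multiple edges\<close>
     (\<forall>d\<in>D. \<forall>d'\<in>vert_of rot d. vert_of rot (al d) = vert_of rot (al d') \<longrightarrow> d = d') \<and>
     \<comment> \<open>genus 0: Euler characteristic 2\<close>
     int (card (verts D rot)) - int (card D div 2) + int (card (faces D al rot)) = 2"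

definition deg :: "'d set \<Rightarrow> nat" where
  "deg v = card v"

definition fv :: "('d \<Rightarrow> 'd) \<Rightarrow> ('d \<Rightarrow> 'd) \<Rightarrow> 'd set \<Rightarrow> nat multiset" where
  "fv al rot v = image_mset (\<lambda>d. card (face_of al rot d)) (mset_set v)"

definition curv :: "('d \<Rightarrow> 'd) \<Rightarrow> ('d \<Rightarrow> 'd) \<Rightarrow> 'd set \<Rightarrow> real" where
  "curv al rot v = 1 - real (deg v) / 2 + (\<Sum>d\<in>v. 1 / real (card (face_of al rot d)))"

definition face_verts :: "('d \<Rightarrow> 'd) \<Rightarrow> 'd set \<Rightarrow> 'd set set" where
  "face_verts rot F = vert_of rot ` F"

definition adjacent :: "('d \<Rightarrow> 'd) \<Rightarrow> 'd set \<Rightarrow> 'd set \<Rightarrow> bool" where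
  "adjacent al u w \<longleftrightarrow> (\<exists>d\<in>u. al d \<in> w)"

definition is_prism :: "'d set \<Rightarrow> ('d \<Rightarrow> 'd) \<Rightarrow> ('d \<Rightarrow> 'd) \<Rightarrow> bool" where
  "is_prism D al rot \<longleftrightarrow> (\<exists>N::nat. N \<ge> 3 \<and> card (verts D rot) = 2 * N \<and>
     (\<exists>F1 F2 Q. faces D al rot = {F1, F2} \<union> Q \<and> F1 \<noteq> F2 \<and> F1 \<notin> Q \<and> F2 \<notin> Q \<and>
        card F1 = N \<and> card F2 = N \<and> card Q = N \<and> (\<forall>q\<in>Q. card q = 4) \<and>
        (\<forall>v\<in>verts D rot. card {d\<in>v. face_of al rot d \<in> Q} = 2 \<and>
                          card {d\<in>v. face_of al rot d \<in> {F1, F2}} = 1 \<and> deg v = 3)))"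

definition is_antiprism :: "'d set \<Rightarrow> ('d \<Rightarrow> 'd) \<Rightarrow> ('d \<Rightarrow> 'd) \<Rightarrow> bool" where
  "is_antiprism D al rot \<longleftrightarrow> (\<exists>N::nat. N \<ge> 3 \<and> card (verts D rot) = 2 * N \<and>
     (\<exists>F1 F2 T. faces D al rot = {F1, F2} \<union> T \<and> F1 \<noteq> F2 \<and> F1 \<notin> T \<and> F2 \<notin> T \<and>
        card F1 = N \<and> card F2 = N \<and> card T = 2 * N \<and> (\<forall>t\<in>T. card t = 3) \<and>
        (\<forall>v\<in>verts D rot. card {d\<in>v. face_of al rot d \<in> T} = 3 \<and>
                          card {d\<in>v. face_of al rot d \<in> {F1, F2}} = 1 \<and> deg v = 4)))"

definition planar_PCC :: "'d set \<Rightarrow> ('d \<Rightarrow> 'd) \<Rightarrow> ('d \<Rightarrow> 'd) \<Rightarrow> bool" where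
  "planar_PCC D al rot \<longleftrightarrow> sphere_map D al rot \<and>
     (\<forall>v\<in>verts D rot. curv al rot v > 0 \<and> deg v \<ge> 3) \<and>
     \<not> is_prism D al rot \<and> \<not> is_antiprism D al rot"

definition Aset :: "'d set \<Rightarrow> ('d \<Rightarrow> 'd) \<Rightarrow> ('d \<Rightarrow> 'd) \<Rightarrow> 'd set \<Rightarrow> nat multiset \<Rightarrow> 'd set set" where
  "Aset D al rot S m = {v \<in> face_verts rot S. fv al rot v = m}"

definition A1 :: "'d set \<Rightarrow> ('d \<Rightarrow> 'd) \<Rightarrow> ('d \<Rightarrow> 'd) \<Rightarrow> 'd set \<Rightarrow> 'd set set" where
  "A1 D al rot S = Aset D al rot S {#3, 3, 3, card S#}"
definition A5 :: "'d set \<Rightarrow> ('d \<Rightarrow> 'd) \<Rightarrow> ('d \<Rightarrow> 'd) \<Rightarrow> 'd set \<Rightarrow> 'd set set" where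
  "A5 D al rot S = Aset D al rot S {#3, 5, card S#}"
definition A6 :: "'d set \<Rightarrow> ('d \<Rightarrow> 'd) \<Rightarrow> ('d \<Rightarrow> 'd) \<Rightarrow> 'd set \<Rightarrow> 'd set set" where
  "A6 D al rot S = Aset D al rot S {#3, 6, card S#}"

definition Tset :: "'d set \<Rightarrow> ('d \<Rightarrow> 'd) \<Rightarrow> ('d \<Rightarrow> 'd) \<Rightarrow> 'd set \<Rightarrow> 'd set set" where
  "Tset D al rot S = {T \<in> faces D al rot. card T = 3 \<and>
     (\<exists>v v1 v2. face_verts rot T = {v, v1, v2} \<and>
        v1 \<in> A1 D al rot S \<union> A5 D al rot S \<union> A6 D al rot S \<and>
        v2 \<in> A1 D al rot S \<union> A5 D al rot S \<union> A6 D al rot S)}"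

definition C1 :: "'d set \<Rightarrow> ('d \<Rightarrow> 'd) \<Rightarrow> ('d \<Rightarrow> 'd) \<Rightarrow> 'd set \<Rightarrow> 'd set set" where
  "C1 D al rot S = {v \<in> verts D rot. v \<notin> face_verts rot S \<and>
     (\<exists>T\<in>Tset D al rot S. v \<in> face_verts rot T)}"

definition tau :: "'d set \<Rightarrow> ('d \<Rightarrow> 'd) \<Rightarrow> ('d \<Rightarrow> 'd) \<Rightarrow> 'd set \<Rightarrow> 'd set \<Rightarrow> 'd set" where
  "tau D al rot S v = (THE T. T \<in> Tset D al rot S \<and> v \<in> face_verts rot T)"

definition C15 :: "'d set \<Rightarrow> ('d \<Rightarrow> 'd) \<Rightarrow> ('d \<Rightarrow> 'd) \<Rightarrow> 'd set \<Rightarrow> 'd set set" where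
  "C15 D al rot S = {v \<in> C1 D al rot S. \<exists>v1 v2.
     face_verts rot (tau D al rot S v) = {v, v1, v2} \<and> v1 \<in> A1 D al rot S \<and> v2 \<in> A5 D al rot S}"

definition C16 :: "'d set \<Rightarrow> ('d \<Rightarrow> 'd) \<Rightarrow> ('d \<Rightarrow> 'd) \<Rightarrow> 'd set \<Rightarrow> 'd set set" where
  "C16 D al rot S = {v \<in> C1 D al rot S. \<exists>v1 v2.
     face_verts rot (tau D al rot S v) = {v, v1, v2} \<and> v1 \<in> A1 D al rot S \<and> v2 \<in> A6 D al rot S}"

definition Dset :: "'d set \<Rightarrow> ('d \<Rightarrow> 'd) \<Rightarrow> ('d \<Rightarrow> 'd) \<Rightarrow> 'd set \<Rightarrow> 'd set set" where
  "Dset D al rot S = {v \<in> verts D rot. \<exists>v'\<in>C16 D al rot S. \<exists>d\<in>v. al d \<in> v' \<and>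
     {#card (face_of al rot d), card (face_of al rot (al d))#} = {#5, 6#}}"

end

theory Submission
  imports Defs
begin


lemma orb_gen:
  assumes "permutation f" "card (orbit f x) = n"
  shows "n > 0 \<and> (f^^n) x = x \<and> inj_on (\<lambda>m. (f^^m) x) {0..<n} \<and> orbit f x = (\<lambda>m. (f^^m) x) ` {0..<n}"
proof -
  have xin: "x \<in> orbit f x" using assms(1) by (rule permutation_self_in_orbit)
  define k where "k = funpow_dist1 f x x"
  have e: "orbit f x = (\<lambda>m. (f^^m) x) ` {0..<k}" unfolding k_def by (rule orbit_conv_funpow_dist1[OF xin])
  have i: "inj_on (\<lambda>m. (f^^m) x) {0..<k}" unfolding k_def by (rule inj_on_funpow_dist1[OF xin])
  have "card (orbit f x) = k" using e i by (simp add: card_image)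
  hence "n = k" using assms(2) by simp
  moreover have "(f^^k) x = x" unfolding k_def by (rule funpow_dist1_prop[OF xin])
  ultimately show ?thesis using e i k_def by auto
qed

lemma orb3:
  assumes "permutation f" "card (orbit f x) = 3"
  shows "f (f (f x)) = x \<and> x \<noteq> f x \<and> x \<noteq> f (f x) \<and> f x \<noteq> f (f x) \<and> orbit f x = {x, f x, f (f x)}"
proof -
  note g = orb_gen[OF assms]
  have inj: "inj_on (\<lambda>m. (f^^m) x) {0..<3}" using g by blast
  have d01: "x \<noteq> f x" using inj_onD[OF inj, of 0 1] by auto
  have d02: "x \<noteq> f (f x)" using inj_onD[OF inj, of 0 2] by (auto simp: numeral_2_eq_2)
  have d12: "f x \<noteq> f (f x)" using inj_onD[OF inj, of 1 2] by (auto simp: numeral_2_eq_2)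
  have "{0..<3::nat} = {0,1,2}" by auto
  hence o: "orbit f x = {x, f x, f (f x)}" using g by (auto simp: numeral_2_eq_2)
  have "f (f (f x)) = x" using g by (simp add: numeral_3_eq_3)
  thus ?thesis using d01 d02 d12 o by blast
qed

lemma orb4:
  assumes "permutation f" "card (orbit f x) = 4"
  shows "f (f (f (f x))) = x \<and> distinct [x, f x, f (f x), f (f (f x))] \<and> orbit f x = {x, f x, f (f x), f (f (f x))}"
proof -
  note g = orb_gen[OF assms]
  have inj: "inj_on (\<lambda>m. (f^^m) x) {0..<4}" using g by blast
  have "(f^^0) x \<noteq> (f^^1) x" using inj_on_contraD[OF inj, of 0 1] by simp
  moreover have "(f^^0) x \<noteq> (f^^2) x" using inj_on_contraD[OF inj, of 0 2] by simp
  moreover have "(f^^0) x \<noteq> (f^^3) x" using inj_on_contraD[OF inj, of 0 3] by simp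
  moreover have "(f^^1) x \<noteq> (f^^2) x" using inj_on_contraD[OF inj, of 1 2] by simp
  moreover have "(f^^1) x \<noteq> (f^^3) x" using inj_on_contraD[OF inj, of 1 3] by simp
  moreover have "(f^^2) x \<noteq> (f^^3) x" using inj_on_contraD[OF inj, of 2 3] by simp
  ultimately have "distinct [x, f x, f (f x), f (f (f x))]" by (simp add: eval_nat_numeral)
  moreover have "{0..<4::nat} = {0,1,2,3}" by auto
  hence "orbit f x = {(f^^0) x, (f^^1) x, (f^^2) x, (f^^3) x}" using g by simp
  hence "orbit f x = {x, f x, f (f x), f (f (f x))}" by (simp add: eval_nat_numeral)
  moreover have "(f^^4) x = x" using g by simp
  hence "f (f (f (f x))) = x" by (simp add: eval_nat_numeral)
  ultimately show ?thesis by blast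
qed

lemma orb6:
  assumes "permutation f" "card (orbit f x) = 6"
  shows "f (f (f (f (f (f x))))) = x"
  proof -
  have "(f^^6) x = x" using orb_gen[OF assms] by simp
  thus ?thesis by (simp add: eval_nat_numeral)
qed

lemma orb2:
  assumes "f (f x) = x"
  shows "card (orbit f x) \<le> 2"
proof -
  have "(f^^2) x = x" using assms by (simp add: numeral_2_eq_2)
  hence "orbit f x = {(f^^m) x | m. m < 2}" by (rule orbit_altdef_bounded) simp
  also have "\<dots> = {x, f x}"
    apply (auto simp: numeral_2_eq_2 less_Suc_eq)
     apply (rule exI[of _ 0]; simp)
    apply (rule exI[of _ 1]; simp)
    done
  finally show ?thesis by (simp add: card_insert_le_m1)
qed

lemma orb_eq: assumes "permutation f" "y \<in> orbit f x" shows "orbit f y = orbit f x"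
proof -
  have xx: "x \<in> orbit f x" using assms(1) by (rule permutation_self_in_orbit)
  have "x \<in> orbit f y" by (rule orbit_swap[OF xx assms(2)])
  show ?thesis
  proof
    show "orbit f y \<subseteq> orbit f x" using orbit_trans[OF _ assms(2)] by blast
    show "orbit f x \<subseteq> orbit f y" using orbit_trans[OF _ \<open>x \<in> orbit f y\<close>] by blast
  qed
qed




locale pcc =
  fixes D :: "'d set" and al rot :: "'d \<Rightarrow> 'd" and S :: "'d set"
  assumes pc: "planar_PCC D al rot" and SF: "S \<in> faces D al rot" and N42: "card S \<ge> 42"
begin

abbreviation phi where "phi \<equiv> rot \<circ> al"
abbreviation V where "V x \<equiv> orbit rot x"
abbreviation F where "F x \<equiv> orbit phi x"
abbreviation s where "s x \<equiv> card (F x)"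
abbreviation N where "N \<equiv> card S"
abbreviation onS where "onS U \<equiv> U \<in> V ` S"

lemma sm: "sphere_map D al rot" using pc by (simp add: planar_PCC_def)
lemma finD: "finite D" using sm by (simp add: sphere_map_def)
lemma alp: "al permutes D" using sm by (simp add: sphere_map_def)
lemma rotp: "rot permutes D" using sm by (simp add: sphere_map_def)
lemma alal: "x \<in> D \<Longrightarrow> al (al x) = x" using sm by (simp add: sphere_map_def)
lemma alD: "x \<in> D \<Longrightarrow> al x \<in> D" using alp by (simp add: permutes_in_image)
lemma rotD: "x \<in> D \<Longrightarrow> rot x \<in> D" using rotp by (simp add: permutes_in_image)
lemma phip: "phi permutes D" using permutes_compose[OF alp rotp] .
lemma perm_rot: "permutation rot" using rotp finD permutation_permutes by blast
lemma perm_phi: "permutation phi" using phip finD permutation_permutes by blast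
lemma noloop: "x \<in> D \<Longrightarrow> al x \<notin> V x" using sm by (simp add: sphere_map_def vert_of_def)
lemma simple: "x \<in> D \<Longrightarrow> y \<in> V x \<Longrightarrow> V (al x) = V (al y) \<Longrightarrow> x = y"
  using sm unfolding sphere_map_def vert_of_def by blast
lemma vertsI: "x \<in> D \<Longrightarrow> V x \<in> verts D rot" by (simp add: verts_def vert_of_def)
lemma curvpos: "x \<in> D \<Longrightarrow> curv al rot (V x) > 0"
  using pc vertsI unfolding planar_PCC_def by blast
lemma deg3: "x \<in> D \<Longrightarrow> card (V x) \<ge> 3"
  using pc vertsI unfolding planar_PCC_def deg_def by blast

lemma Vself: "x \<in> V x" by (rule permutation_self_in_orbit[OF perm_rot])
lemma Fself: "x \<in> F x" by (rule permutation_self_in_orbit[OF perm_phi])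
lemma Vin: "y \<in> V x \<Longrightarrow> V y = V x" by (rule orb_eq[OF perm_rot])
lemma Fin: "y \<in> F x \<Longrightarrow> F y = F x" by (rule orb_eq[OF perm_phi])
lemma Vrot: "V (rot x) = V x" by (rule permutation_orbit_step[OF perm_rot])
lemma Fphi: "F (rot (al x)) = F x" using permutation_orbit_step[OF perm_phi, of x] by simp

lemma orbit_D: assumes "f permutes D" "x \<in> D" shows "orbit f x \<subseteq> D"
proof
  fix y assume "y \<in> orbit f x" then show "y \<in> D"
    by induct (use assms in \<open>auto simp: permutes_in_image\<close>)
qed
lemma VD: "x \<in> D \<Longrightarrow> V x \<subseteq> D" by (rule orbit_D[OF rotp])
lemma FD: "x \<in> D \<Longrightarrow> F x \<subseteq> D" by (rule orbit_D[OF phip])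
lemma finV: "x \<in> D \<Longrightarrow> finite (V x)" using VD finD finite_subset by blast
lemma finF: "x \<in> D \<Longrightarrow> finite (F x)" using FD finD finite_subset by blast

lemma F_al: "x \<in> D \<Longrightarrow> F (al x) = F (rot x)"
  using Fphi[of "al x"] alal by simp

lemma rot_ne: "x \<in> D \<Longrightarrow> rot x \<noteq> x"
proof
  assume "x \<in> D" "rot x = x"
  hence "V x = {x}" by (simp add: orbit_eq_singleton_iff)
  thus False using deg3[OF \<open>x \<in> D\<close>] by simp
qed

lemma fsize3: assumes "x \<in> D" shows "s x \<ge> 3"
proof -
  have "s x \<noteq> 0" using finF[OF assms] Fself[of x] by auto
  moreover have "s x \<noteq> 1"
  proof
    assume "s x = 1"
    from orb_gen[OF perm_phi this] have "rot (al x) = x" by simp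
    hence "V x = V (al x)" using Vrot[of "al x"] by simp
    thus False using noloop[OF assms] Vself[of "al x"] by simp
  qed
  moreover have "s x \<noteq> 2"
  proof
    assume "s x = 2"
    from orb_gen[OF perm_phi this] have pp: "phi (phi x) = x" by (simp add: numeral_2_eq_2)
    define y where "y = rot (al x)"
    have yD: "y \<in> D" using assms by (simp add: y_def alD rotD)
    have ry: "rot (al y) = x" using pp by (simp add: y_def)
    have "al y \<in> V x" using ry Vrot[of "al y"] Vself[of "al y"] by simp
    moreover have "V (al x) = V (al (al y))" using alal[OF yD] Vrot[of "al x"] by (simp add: y_def)
    ultimately have "x = al y" using simple[OF assms] by blast
    hence "rot (al x) = al x" using alal[OF yD] by (simp add: y_def)
    thus False using rot_ne[OF alD[OF assms]] by simp
  qed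
  ultimately show ?thesis by linarith
qed

lemma curv_eq: assumes "x \<in> D"
  shows "curv al rot (V x) = 1 + (\<Sum>d\<in>V x. 1 / real (s d) - 1/2)"
  by (simp add: curv_def deg_def face_of_def fperm_def sum_subtractf)

lemma CB: assumes "x \<in> D" "P \<subseteq> V x"
  shows "curv al rot (V x) \<le> 1 + (\<Sum>p\<in>P. 1 / real (s p) - 1/2) - real (card (V x) - card P) / 6"
proof -
  have fin: "finite (V x)" using finV[OF assms(1)] .
  have finP: "finite P" using finite_subset[OF assms(2) fin] .
  have "(\<Sum>d\<in>V x. 1 / real (s d) - 1/2) = (\<Sum>d\<in>V x - P. 1 / real (s d) - 1/2) + (\<Sum>d\<in>P. 1 / real (s d) - 1/2)"
    by (rule sum.subset_diff[OF assms(2) fin])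
  moreover have "(\<Sum>d\<in>V x - P. 1 / real (s d) - 1/2) \<le> (\<Sum>d\<in>V x - P. - 1/6)"
  proof (rule sum_mono)
    fix d assume "d \<in> V x - P"
    hence "d \<in> D" using VD[OF assms(1)] by blast
    hence "real (s d) \<ge> 3" using fsize3 by simp
    hence "1 / real (s d) \<le> 1/3" by (simp add: divide_simps)
    thus "1 / real (s d) - 1/2 \<le> - 1/6" by simp
  qed
  moreover have "(\<Sum>d\<in>V x - P. - 1/6 :: real) = - real (card (V x) - card P) / 6"
    using card_Diff_subset[OF finP assms(2)] by simp
  ultimately show ?thesis using curv_eq[OF assms(1)] by linarith
qed

lemma invN: "1 / real N \<le> 1/42" using N42 by (simp add: divide_simps)

end



lemma mset2: "add_mset (a::nat) {#b#} = {#5, 6#} \<Longrightarrow> (a = 5 \<and> b = 6) \<or> (a = 6 \<and> b = 5)"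
proof -
  assume e: "add_mset (a::nat) {#b#} = {#5, 6#}"
  have "a \<in># {#5,6#}" "b \<in># {#5,6#}" using e by (metis union_single_eq_member, metis e add_mset_commute union_single_eq_member)
  hence "(a = 5 \<or> a = 6) \<and> (b = 5 \<or> b = 6)" by auto
  moreover have "count (add_mset a {#b#}) 5 = 1" using e by simp
  moreover have "count (add_mset a {#b#}) 6 = 1" using e by simp
  ultimately show ?thesis by auto
qed

lemma set3: "(X::'a) \<noteq> Y \<Longrightarrow> Z \<noteq> X \<Longrightarrow> Z \<noteq> Y \<Longrightarrow> {Z, X, Y} = {a,b,c} \<Longrightarrow> b \<noteq> Z \<Longrightarrow> c \<noteq> Z \<Longrightarrow> X \<in> {b,c} \<and> Y \<in> {b,c}"
  by (smt (verit) insert_iff singleton_iff)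

context pcc begin

abbreviation AA where "AA \<equiv> A1 D al rot S \<union> A5 D al rot S \<union> A6 D al rot S"

lemma fv_eq: "fv al rot U = image_mset s (mset_set U)"
  by (simp add: fv_def face_of_def fperm_def)

lemma S_ex: "\<exists>s0\<in>D. S = F s0" using SF by (auto simp: faces_def face_of_def fperm_def)
lemma S_D: "S \<subseteq> D" proof - obtain s0 where "s0 \<in> D" "S = F s0" using S_ex by blast
  thus ?thesis using FD[of s0] by simp qed
lemma S_F: "c \<in> S \<Longrightarrow> F c = S" proof - assume "c \<in> S" obtain s0 where "s0 \<in> D" "S = F s0" using S_ex by blast
  thus ?thesis using Fin[of c s0] \<open>c \<in> S\<close> by simp qed
lemma S_s: "c \<in> S \<Longrightarrow> s c = N" using S_F by simp

lemma A_onS: "U \<in> AA \<Longrightarrow> onS U"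
  by (auto simp: A1_def A5_def A6_def Aset_def face_verts_def vert_of_def)
lemma onS_fin: "onS U \<Longrightarrow> finite U" proof - assume "onS U" then obtain c where "c \<in> S" "U = V c" by blast
  thus ?thesis using S_D finV[of c] by auto qed

lemma in_fv: "onS U \<Longrightarrow> y \<in> U \<Longrightarrow> s y \<in># fv al rot U"
  using onS_fin by (simp add: fv_eq)

lemma A1_sz: "U \<in> A1 D al rot S \<Longrightarrow> y \<in> U \<Longrightarrow> s y = 3 \<or> s y = N"
proof -
  assume a: "U \<in> A1 D al rot S" "y \<in> U"
  hence "onS U" using A_onS by blast
  hence "s y \<in># fv al rot U" using in_fv a(2) by blast
  moreover have "fv al rot U = {#3, 3, 3, N#}" using a(1) by (simp add: A1_def Aset_def)
  ultimately show ?thesis by simp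
qed
lemma A5_sz: "U \<in> A5 D al rot S \<Longrightarrow> y \<in> U \<Longrightarrow> s y = 3 \<or> s y = 5 \<or> s y = N"
proof -
  assume a: "U \<in> A5 D al rot S" "y \<in> U"
  hence "onS U" using A_onS by blast
  hence "s y \<in># fv al rot U" using in_fv a(2) by blast
  moreover have "fv al rot U = {#3, 5, N#}" using a(1) by (simp add: A5_def Aset_def)
  ultimately show ?thesis by simp
qed
lemma A6_sz: "U \<in> A6 D al rot S \<Longrightarrow> y \<in> U \<Longrightarrow> s y = 3 \<or> s y = 6 \<or> s y = N"
proof -
  assume a: "U \<in> A6 D al rot S" "y \<in> U"
  hence "onS U" using A_onS by blast
  hence "s y \<in># fv al rot U" using in_fv a(2) by blast
  moreover have "fv al rot U = {#3, 6, N#}" using a(1) by (simp add: A6_def Aset_def)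
  ultimately show ?thesis by simp
qed

lemma two3:
  assumes "U \<in> A5 D al rot S \<union> A6 D al rot S" "y1 \<in> U" "y2 \<in> U" "y1 \<noteq> y2" "s y1 = 3" "s y2 = 3"
  shows False
proof -
  have "onS U" using A_onS assms(1) by blast
  hence fin: "finite U" by (rule onS_fin)
  have "mset_set {y1, y2} \<subseteq># mset_set U"
    using assms(2,3) fin by (intro subset_imp_msubset_mset_set) auto
  hence "image_mset s (mset_set {y1, y2}) \<subseteq># fv al rot U"
    unfolding fv_eq by (rule image_mset_subseteq_mono)
  hence "{#3, 3#} \<subseteq># fv al rot U" using assms(4,5,6) by simp
  hence "count {#3::nat, 3#} 3 \<le> count (fv al rot U) 3" by (rule mset_subset_eq_count)
  moreover have "count (fv al rot U) 3 \<le> 1"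
    using assms(1) N42 by (auto simp: A5_def A6_def Aset_def)
  ultimately show False by simp
qed

lemma A1_A6: "U \<in> A1 D al rot S \<Longrightarrow> U \<in> A6 D al rot S \<Longrightarrow> False"
proof -
  assume "U \<in> A1 D al rot S" "U \<in> A6 D al rot S"
  hence "{#3, 3, 3, N#} = {#3, 6, N#}" by (simp add: A1_def A6_def Aset_def)
  hence "size {#3, 3, 3, N#} = size {#3, 6, N#}" by simp
  thus False by simp
qed

lemma fverts: "face_verts rot T = V ` T" by (auto simp: face_verts_def vert_of_def)

lemma noloopV: "z \<in> D \<Longrightarrow> V (al z) \<noteq> V z"
proof assume "z \<in> D" "V (al z) = V z" thus False using noloop[of z] Vself[of "al z"] by simp qed

lemma SEE: assumes "y \<in> D"
  shows "al y \<in> V (al y) \<and> rot (al y) \<in> V (al y) \<and> s (al y) = s (rot y) \<and> s (rot (al y)) = s y \<and> rot (al y) \<noteq> al y"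
  using Vself[of "al y"] Vrot[of "al y"] Vself[of "rot (al y)"] F_al[OF assms] Fphi[of y] rot_ne[OF alD[OF assms]]
  by auto

lemma TRI: assumes "y \<in> D" "s (rot y) = 3"
  shows "V ` F (rot y) = {V y, V (al y), V (al (rot y))} \<and> V y \<noteq> V (al y) \<and> V y \<noteq> V (al (rot y)) \<and> V (al y) \<noteq> V (al (rot y))"
proof -
  define t where "t = al y"
  have tD: "t \<in> D" using assms(1) by (simp add: t_def alD)
  have Ft: "F t = F (rot y)" using F_al[OF assms(1)] by (simp add: t_def)
  have o: "phi (phi (phi t)) = t \<and> F t = {t, phi t, phi (phi t)}"
    using orb3[OF perm_phi, of t] Ft assms(2) by simp
  have p1: "phi t = rot y" using alal[OF assms(1)] by (simp add: t_def)
  have ryD: "rot y \<in> D" using rotD[OF assms(1)] .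
  have w: "rot (al (rot (al (rot y)))) = al y" using o p1 by (simp add: t_def)
  define w where "w = rot (al (rot y))"
  have wD: "w \<in> D" using ryD by (simp add: w_def alD rotD)
  have "V ` F (rot y) = {V t, V (rot y), V (rot (al (rot y)))}" using o p1 Ft by simp
  also have "\<dots> = {V (al y), V y, V (al (rot y))}" using Vrot by (simp add: t_def)
  finally have e: "V ` F (rot y) = {V y, V (al y), V (al (rot y))}" by auto
  have d1: "V y \<noteq> V (al y)" using noloopV[OF assms(1)] by metis
  have d2: "V y \<noteq> V (al (rot y))" using noloopV[OF ryD] Vrot[of y] by metis
  have "V (al w) \<noteq> V w" using noloopV[OF wD] .
  hence d3: "V (al y) \<noteq> V (al (rot y))" using w Vrot[of "al (rot y)"] Vrot[of "al w"] by (simp add: w_def)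
  show ?thesis using e d1 d2 d3 by blast
qed

lemma Tset_at: assumes "T \<in> Tset D al rot S" "U \<in> V ` T"
  shows "\<exists>t. t \<in> T \<and> t \<in> D \<and> V t = U \<and> T = F t \<and> s t = 3"
proof -
  have "T \<in> face_of al rot ` D" using assms(1) by (simp add: Tset_def faces_def)
  then obtain t0 where t0: "t0 \<in> D" "T = F t0" by (auto simp: face_of_def fperm_def)
  obtain t where t: "t \<in> T" "U = V t" using assms(2) by blast
  have "F t = T" using Fin[of t t0] t(1) t0(2) by simp
  moreover have "card T = 3" using assms(1) by (simp add: Tset_def)
  moreover have "t \<in> D" using FD[OF t0(1)] t(1) t0(2) by auto
  ultimately show ?thesis using t by auto
qed

lemma TSET_A: assumes "y \<in> D" "s (rot y) = 3" "F (rot y) \<in> Tset D al rot S" "\<not> onS (V y)"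
  shows "V (al y) \<in> AA \<and> V (al (rot y)) \<in> AA"
proof -
  note tri = TRI[OF assms(1,2)]
  have "\<exists>a b c. face_verts rot (F (rot y)) = {a, b, c} \<and> b \<in> AA \<and> c \<in> AA"
    using assms(3) by (simp add: Tset_def)
  then obtain a b c where abc: "V ` F (rot y) = {a, b, c}" "b \<in> AA" "c \<in> AA"
    by (auto simp: fverts)
  have bV: "b \<noteq> V y" using A_onS[OF abc(2)] assms(4) by auto
  have cV: "c \<noteq> V y" using A_onS[OF abc(3)] assms(4) by auto
  have "{V y, V (al y), V (al (rot y))} = {a, b, c}" using tri abc(1) by simp
  have "V (al y) \<in> {b, c} \<and> V (al (rot y)) \<in> {b, c}"
  proof -
    from tri have d1: "V y \<noteq> V (al y)" and d2: "V y \<noteq> V (al (rot y))" and d3: "V (al y) \<noteq> V (al (rot y))"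
      by auto
    show ?thesis by (rule set3[OF d3 d1 d2 \<open>{V y, V (al y), V (al (rot y))} = {a, b, c}\<close> bV cV])
  qed
  thus ?thesis using abc(2,3) by auto
qed

end



context pcc begin

lemma injrot: "inj rot" using perm_rot by (simp add: permutation_bijective bij_is_inj)
lemma injphi: "inj phi" using perm_phi by (simp add: permutation_bijective bij_is_inj)

lemma N6: assumes "x \<in> D" "p \<in> V x" "q \<in> V x" "s p = N" "s q = 6"
  shows "card (V x) = 3 \<and> (\<forall>z\<in>V x. z \<noteq> p \<longrightarrow> z \<noteq> q \<longrightarrow> s z = 3)"
proof -
  have pq: "p \<noteq> q" using assms(4,5) N42 by auto
  have c3: "card (V x) \<ge> 3" using deg3[OF assms(1)] .
  have pos: "curv al rot (V x) > 0" using curvpos[OF assms(1)] .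
  have iN: "1 / real N \<le> 1/42" by (rule invN)
  have "curv al rot (V x) \<le> 1 + (\<Sum>w\<in>{p,q}. 1 / real (s w) - 1/2) - real (card (V x) - card {p,q}) / 6"
    using CB[OF assms(1)] assms(2,3) by simp
  hence b: "curv al rot (V x) \<le> 1 + (1 / real N - 1/2) + (1/6 - 1/2) - real (card (V x) - 2) / 6"
    using pq assms(4,5) by simp
  have n3: "card (V x) = 3"
  proof (rule ccontr)
    assume "card (V x) \<noteq> 3" hence "card (V x) \<ge> 4" using c3 by simp
    hence "real (card (V x) - 2) \<ge> 2" by simp
    with b pos iN show False by linarith
  qed
  have "\<forall>z\<in>V x. z \<noteq> p \<longrightarrow> z \<noteq> q \<longrightarrow> s z = 3"
  proof (intro ballI impI)
    fix z assume z: "z \<in> V x" "z \<noteq> p" "z \<noteq> q"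
    have zD: "z \<in> D" using VD[OF assms(1)] z(1) by blast
    have "curv al rot (V x) \<le> 1 + (\<Sum>w\<in>{p,q,z}. 1 / real (s w) - 1/2) - real (card (V x) - card {p,q,z}) / 6"
      using CB[OF assms(1)] assms(2,3) z(1) by simp
    hence b2: "curv al rot (V x) \<le> 1 + (1 / real N - 1/2) + (1/6 - 1/2) + (1 / real (s z) - 1/2)"
      using pq z assms(4,5) n3 by simp
    show "s z = 3"
    proof (rule ccontr)
      assume "s z \<noteq> 3" hence "s z \<ge> 4" using fsize3[OF zD] by simp
      hence "1 / real (s z) \<le> 1/4" by (simp add: divide_simps)
      with b2 pos iN show False by linarith
    qed
  qed
  with n3 show ?thesis by blast
qed

lemma L56: assumes "x \<in> D" "(s x = 5 \<and> s (rot x) = 6) \<or> (s x = 6 \<and> s (rot x) = 5)" "t \<in> V x" "s t = 3"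
  shows "(card (V x) = 3 \<and> s (rot (rot x)) = 3) \<or> (card (V x) = 4 \<and> s (rot (rot x)) = 3 \<and> s (rot (rot (rot x))) = 3)"
proof -
  have rx: "rot x \<in> V x" using Vrot[of x] Vself[of "rot x"] by simp
  have d: "x \<noteq> rot x" "x \<noteq> t" "rot x \<noteq> t" using assms(2,4) by auto
  have sum56: "1 / real (s x) + 1 / real (s (rot x)) = 1/5 + 1/6" using assms(2) by auto
  have c3: "card (V x) \<ge> 3" using deg3[OF assms(1)] .
  have pos: "curv al rot (V x) > 0" using curvpos[OF assms(1)] .
  have "curv al rot (V x) \<le> 1 + (\<Sum>w\<in>{x, rot x, t}. 1 / real (s w) - 1/2) - real (card (V x) - card {x, rot x, t}) / 6"
    using CB[OF assms(1)] Vself[of x] rx assms(3) by simp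
  hence b: "curv al rot (V x) \<le> 1 + (1 / real (s x) - 1/2) + (1 / real (s (rot x)) - 1/2) + (1/3 - 1/2) - real (card (V x) - 3) / 6"
    using d assms(4) by simp
  have n4: "card (V x) \<le> 4"
  proof (rule ccontr)
    assume "\<not> card (V x) \<le> 4" hence "real (card (V x) - 3) \<ge> 2" by simp
    with b pos sum56 show False by linarith
  qed
  show ?thesis
  proof (cases "card (V x) = 3")
    case True
    from orb3[OF perm_rot True] have o: "V x = {x, rot x, rot (rot x)}" by blast
    hence "t = rot (rot x)" using assms(3) d by auto
    thus ?thesis using True assms(4) by simp
  next
    case False
    hence n: "card (V x) = 4" using n4 c3 by simp
    from orb4[OF perm_rot n] have o: "distinct [x, rot x, rot (rot x), rot (rot (rot x))]"
      "V x = {x, rot x, rot (rot x), rot (rot (rot x))}" by auto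
    have "s w = 3" if w: "w = rot (rot x) \<or> w = rot (rot (rot x))" for w
    proof (rule ccontr)
      assume "s w \<noteq> 3"
      have wD: "w \<in> D" using w assms(1) rotD by auto
      have wV: "w \<in> V x" using w o(2) by auto
      have dw: "x \<noteq> w" "rot x \<noteq> w" using w o(1) by auto
      have "s w \<ge> 4" using fsize3[OF wD] \<open>s w \<noteq> 3\<close> by simp
      hence iw: "1 / real (s w) \<le> 1/4" by (simp add: divide_simps)
      have "curv al rot (V x) \<le> 1 + (\<Sum>u\<in>{x, rot x, w}. 1 / real (s u) - 1/2) - real (card (V x) - card {x, rot x, w}) / 6"
        using CB[OF assms(1)] Vself[of x] rx wV by simp
      hence "curv al rot (V x) \<le> 1 + (1 / real (s x) - 1/2) + (1 / real (s (rot x)) - 1/2) + (1 / real (s w) - 1/2) - 1 / 6"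
        using d dw n by simp
      with pos sum56 iw show False by linarith
    qed
    thus ?thesis using n by simp
  qed
qed

end

context pcc begin


lemma K: assumes g0D: "g0 \<in> D" and s0: "s g0 = 6" and g5D: "g5 \<in> D" and g5: "rot (al g5) = g0"
  and n0: "\<not> onS (V g0)" and n1: "\<not> onS (V (rot (al g0)))"
  and o2: "onS (V (rot (al (rot (al g0)))))" and o5: "onS (V g5)"
  shows False
proof -
  define g1 where "g1 = rot (al g0)"
  define g2 where "g2 = rot (al g1)"
  define g3 where "g3 = rot (al g2)"
  define g4 where "g4 = rot (al g3)"
  have i1: "g1 \<in> F g0" unfolding g1_def using orbit.base[of phi g0] by simp
  have i2: "g2 \<in> F g0" unfolding g2_def using orbit.step[OF i1] by simp
  have i3: "g3 \<in> F g0" unfolding g3_def using orbit.step[OF i2] by simp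
  have i4: "g4 \<in> F g0" unfolding g4_def using orbit.step[OF i3] by simp
  have i5': "rot (al g4) \<in> F g0" using orbit.step[OF i4] by simp
  have o6: "phi (phi (phi (phi (phi (phi g0))))) = g0" using orb6[OF perm_phi s0] .
  hence "phi (rot (al g4)) = phi g5" using g5 by (simp add: g1_def g2_def g3_def g4_def)
  hence g45: "rot (al g4) = g5" using injD[OF injphi] by blast
  have i5: "g5 \<in> F g0" using i5' g45 by simp
  have sz: "s g1 = 6" "s g2 = 6" "s g3 = 6" "s g4 = 6" "s g5 = 6"
    using Fin[OF i1] Fin[OF i2] Fin[OF i3] Fin[OF i4] Fin[OF i5] s0 by auto
  have DD: "g1 \<in> D" "g2 \<in> D" "g3 \<in> D" "g4 \<in> D"
    using FD[OF g0D] i1 i2 i3 i4 by auto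
  have N6n: "N \<noteq> 6" "N \<noteq> 3" using N42 by auto
  obtain c where c: "c \<in> S" "V c = V g2" using o2 by (auto simp: g1_def g2_def)
  have cV: "c \<in> V g2" using c(2) Vself[of c] by simp
  have sc: "s c = N" using S_s[OF c(1)] .
  have "card (V g2) = 3" using N6[OF DD(2) cV Vself[of g2] sc sz(2)] by blast
  from orb3[OF perm_rot this] have o3_2: "rot (rot (rot g2)) = g2" "V g2 = {g2, rot g2, rot (rot g2)}" by auto
  have a1: "rot (rot g2) = al g1" using o3_2(1) injD[OF injrot, of "rot (rot g2)" "al g1"] by (simp add: g2_def)
  have "c \<noteq> g2" using sc sz(2) N6n by auto
  moreover have "c \<noteq> al g1"
  proof
    assume "c = al g1"
    hence "F (rot g1) = S" using F_al[OF DD(1)] S_F[OF c(1)] by simp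
    hence "rot g1 \<in> S" using Fself[of "rot g1"] by simp
    hence "onS (V g1)" using Vrot[of g1] by (metis imageI)
    thus False using n1 by (simp add: g1_def)
  qed
  ultimately have cr: "c = rot g2" using cV o3_2(2) a1 by auto
  have ag2S: "al g2 \<in> S" using F_al[OF DD(2)] S_F[OF c(1)] cr Fself[of "al g2"] by simp
  have ag2V: "al g2 \<in> V g3" using Vrot[of "al g2"] Vself[of "al g2"] by (simp add: g3_def)
  have N63: "card (V g3) = 3 \<and> (\<forall>z\<in>V g3. z \<noteq> al g2 \<longrightarrow> z \<noteq> g3 \<longrightarrow> s z = 3)"
    using N6[OF DD(3) ag2V Vself[of g3] S_s[OF ag2S] sz(3)] .
  from orb3[OF perm_rot, of g3] N63 have o3_3: "g3 \<noteq> rot g3" "rot g3 \<noteq> rot (rot g3)" by auto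
  have "card (V (al g2)) = 3" using N63 Vin[OF ag2V] by simp
  from orb3[OF perm_rot this] have "rot (rot (rot (al g2))) = al g2" by blast
  define h where "h = rot g3"
  have rh: "rot h = al g2" using \<open>rot (rot (rot (al g2))) = al g2\<close> by (simp add: h_def g3_def)
  have hV: "h \<in> V g3" using Vrot[of g3] Vself[of "rot g3"] by (simp add: h_def)
  have "h \<noteq> al g2" using rh o3_3(2) by (auto simp: h_def)
  moreover have "h \<noteq> g3" using o3_3(1) by (simp add: h_def)
  ultimately have sh: "s h = 3" using N63 hV by blast
  have hD: "h \<in> D" using DD(3) by (simp add: h_def rotD)
  obtain c' where c': "c' \<in> S" "V c' = V g5" using o5 by auto
  have cV': "c' \<in> V g5" using c'(2) Vself[of c'] by simp
  have sc': "s c' = N" using S_s[OF c'(1)] .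
  have "card (V g5) = 3" using N6[OF g5D cV' Vself[of g5] sc' sz(5)] by blast
  from orb3[OF perm_rot this] have o3_5: "rot (rot (rot g5)) = g5" "V g5 = {g5, rot g5, rot (rot g5)}" by auto
  have a4: "rot (rot g5) = al g4" using o3_5(1) g45 injD[OF injrot, of "rot (rot g5)" "al g4"] by simp
  have "c' \<noteq> g5" using sc' sz(5) N6n by auto
  moreover have "c' \<noteq> rot g5"
  proof
    assume "c' = rot g5"
    hence "F (al g5) = S" using F_al[OF g5D] S_F[OF c'(1)] by simp
    hence "al g5 \<in> S" using Fself[of "al g5"] by simp
    hence "onS (V (al g5))" by (metis imageI)
    thus False using n0 Vrot[of "al g5"] g5 by simp
  qed
  ultimately have cr': "c' = al g4" using cV' o3_5(2) a4 by auto
  have rg4S: "rot g4 \<in> S" using F_al[OF DD(4)] S_F[OF c'(1)] cr' Fself[of "rot g4"] by simp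
  have rg4V: "rot g4 \<in> V g4" using Vrot[of g4] Vself[of "rot g4"] by simp
  have "card (V g4) = 3" using N6[OF DD(4) rg4V Vself[of g4] S_s[OF rg4S] sz(4)] by blast
  from orb3[OF perm_rot this] have "rot (rot (rot g4)) = g4" by blast
  hence a3: "rot (rot g4) = al g3" using injD[OF injrot, of "rot (rot g4)" "al g3"] by (simp add: g4_def)
  define t0 where "t0 = al g3"
  have Ft0: "F t0 = F h" using F_al[OF DD(3)] by (simp add: t0_def h_def)
  have "s t0 = 3" using Ft0 sh by simp
  from orb3[OF perm_phi this] have "phi (phi (phi t0)) = t0" by blast
  moreover have "phi t0 = h" using alal[OF DD(3)] by (simp add: t0_def h_def)
  ultimately have "rot (al (rot (al h))) = rot (rot g4)" using a3 by (simp add: t0_def)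
  hence "al (rot (al h)) = rot g4" using injD[OF injrot] by blast
  hence ra: "rot (al h) = al (rot g4)" using alal[of "rot (al h)"] rotD[OF alD[OF hD]] by metis
  define e where "e = al h"
  have eD: "e \<in> D" using alD[OF hD] by (simp add: e_def)
  have "phi e = al g2" using alal[OF hD] rh by (simp add: e_def)
  hence "F e = S" using Fphi[of e] S_F[OF ag2S] by simp
  hence eS: "e \<in> S" using Fself[of e] by simp
  have "rot (rot e) = phi (rot g4)" using ra by (simp add: e_def)
  hence "F (rot (rot e)) = S" using Fphi[of "rot g4"] S_F[OF rg4S] by simp
  hence e2S: "rot (rot e) \<in> S" using Fself[of "rot (rot e)"] by simp
  have se1: "s (rot e) = 3" using Fphi[of h] sh by (simp add: e_def)
  show False
  proof (cases "rot (rot e) = e")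
    case True
    from orb2[of rot e, OF this] deg3[OF eD] show False by simp
  next
    case False
    have se: "s e = N" "s (rot (rot e)) = N" using S_s eS e2S by auto
    have d: "e \<noteq> rot e" "rot e \<noteq> rot (rot e)" "e \<noteq> rot (rot e)" using se se1 N6n False by auto
    have V1: "rot e \<in> V e" using Vrot[of e] Vself[of "rot e"] by simp
    have V2: "rot (rot e) \<in> V e" using Vrot[of e] Vrot[of "rot e"] Vself[of "rot (rot e)"] by simp
    have "curv al rot (V e) \<le> 1 + (\<Sum>w\<in>{e, rot e, rot (rot e)}. 1 / real (s w) - 1/2) - real (card (V e) - card {e, rot e, rot (rot e)}) / 6"
      using CB[OF eD] Vself[of e] V1 V2 by simp
    moreover have "real (card (V e) - card {e, rot e, rot (rot e)}) \<ge> 0" by simp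
    ultimately have "curv al rot (V e) \<le> 1 + (1 / real N - 1/2) + (1/3 - 1/2) + (1 / real N - 1/2)"
      using d se se1 by simp
    thus False using curvpos[OF eD] invN by linarith
  qed
qed

end



context pcc begin

lemma notA1_56: "U \<in> A1 D al rot S \<Longrightarrow> z \<in> U \<Longrightarrow> s z = 5 \<or> s z = 6 \<Longrightarrow> False"
  using A1_sz N42 by fastforce
lemma notA6_5: "U \<in> A6 D al rot S \<Longrightarrow> z \<in> U \<Longrightarrow> s z = 5 \<Longrightarrow> False"
  using A6_sz N42 by fastforce
lemma notA5_6: "U \<in> A5 D al rot S \<Longrightarrow> z \<in> U \<Longrightarrow> s z = 6 \<Longrightarrow> False"
  using A5_sz N42 by fastforce
lemma AA5: "U \<in> AA \<Longrightarrow> z \<in> U \<Longrightarrow> s z = 5 \<Longrightarrow> U \<in> A5 D al rot S"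
  using notA1_56 notA6_5 by blast
lemma AA1: "U \<in> AA \<Longrightarrow> y1 \<in> U \<Longrightarrow> y2 \<in> U \<Longrightarrow> y1 \<noteq> y2 \<Longrightarrow> s y1 = 3 \<Longrightarrow> s y2 = 3 \<Longrightarrow> U \<in> A1 D al rot S"
  using two3 by blast

lemma tau_eq: assumes "\<And>T. T \<in> Tset D al rot S \<and> v \<in> face_verts rot T \<Longrightarrow> T = T1"
  "T1 \<in> Tset D al rot S \<and> v \<in> face_verts rot T1"
  shows "tau D al rot S v = T1"
  unfolding tau_def using assms by (rule the_equality[rotated])

lemma C1_props: assumes "v \<in> C1 D al rot S"
  shows "\<not> onS v \<and> (\<exists>T. T \<in> Tset D al rot S \<and> v \<in> V ` T)"
  using assms by (auto simp: C1_def fverts)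

lemma Q_char: assumes "T \<in> Tset D al rot S \<and> v \<in> face_verts rot T"
  shows "\<exists>w. w \<in> D \<and> w \<in> v \<and> T = F w \<and> s w = 3"
proof -
  from Tset_at[of T v] assms obtain t where t: "t \<in> T" "t \<in> D" "V t = v" "T = F t" "s t = 3"
    by (auto simp: fverts)
  thus ?thesis using Vself[of t] by auto
qed

lemma QI: assumes "F w \<in> Tset D al rot S" "w \<in> V x"
  shows "F w \<in> Tset D al rot S \<and> V x \<in> face_verts rot (F w)"
proof -
  have "V x = V w" using Vin[OF assms(2)] by simp
  hence "V x \<in> V ` F w" using Fself[of w] by blast
  thus ?thesis using assms(1) by (simp add: fverts)
qed

end



context pcc begin

lemma VP: assumes C16: "v' \<in> C16 D al rot S" and d'D: "d' \<in> D" and vd: "V d' = v'"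
  and sz: "(s d' = 5 \<and> s (rot d') = 6) \<or> (s d' = 6 \<and> s (rot d') = 5)"
  shows "(s (rot d') = 6 \<longrightarrow> onS (V (al (rot d')))) \<and> (s d' = 6 \<longrightarrow> (\<exists>p\<in>D. rot p = d' \<and> onS (V (al p))))"
proof -
  have C1: "v' \<in> C1 D al rot S" using C16 by (simp add: C16_def)
  from C1_props[OF C1] obtain T0 where nS: "\<not> onS v'" and T0: "T0 \<in> Tset D al rot S" "v' \<in> V ` T0" by blast
  have QT0: "T0 \<in> Tset D al rot S \<and> v' \<in> face_verts rot T0" using T0 by (simp add: fverts)
  from Q_char[OF QT0] obtain t where t: "t \<in> D" "t \<in> v'" "T0 = F t" "s t = 3" by blast
  from C16 obtain a b where ab: "V ` tau D al rot S v' = {v', a, b}" "a \<in> A1 D al rot S" "b \<in> A6 D al rot S"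
    by (auto simp: C16_def fverts)
  have aS: "onS a" and bS: "onS b" using A_onS ab by auto
  have av: "a \<noteq> v'" "b \<noteq> v'" using aS bS nS by auto
  have abn: "a \<noteq> b" using A1_A6 ab by blast
  define r1 where "r1 = rot d'"
  define r2 where "r2 = rot r1"
  define r3 where "r3 = rot r2"
  have rD: "r1 \<in> D" "r2 \<in> D" "r3 \<in> D" using d'D by (simp_all add: r1_def r2_def r3_def rotD)
  have Vr: "V r1 = v'" "V r2 = v'" "V r3 = v'" using vd Vrot by (simp_all add: r1_def r2_def r3_def)
  have s56: "s d' = 5 \<or> s d' = 6" "s r1 = 5 \<or> s r1 = 6" using sz by (auto simp: r1_def)
  have nS1: "\<not> onS (V r1)" "\<not> onS (V r2)" using Vr nS by auto
  have tV: "t \<in> V d'" using t(2) vd by simp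
  from L56[OF d'D sz tV t(4)]
  have deg: "(card (V d') = 3 \<and> s r2 = 3) \<or> (card (V d') = 4 \<and> s r2 = 3 \<and> s r3 = 3)"
    by (simp add: r1_def r2_def r3_def)
  have see1: "rot (al r1) \<in> V (al r1)" "s (rot (al r1)) = s r1" using SEE[OF rD(1)] by auto
  have see2: "al r2 \<in> V (al r2)" "s (al r2) = s r3" using SEE[OF rD(2)] by (auto simp: r3_def)
  have see3: "al r3 \<in> V (al r3)" "s (al r3) = s (rot r3)" using SEE[OF rD(3)] by auto
  show ?thesis
  proof (cases "card (V d') = 3")
    case True
    from orb3[OF perm_rot True] have o: "rot r2 = d'" "V d' = {d', r1, r2}"
      by (auto simp: r1_def r2_def)
    have sr2: "s r2 = 3" using deg True by simp
    have qchar: "T = F r2" if "T \<in> Tset D al rot S \<and> v' \<in> face_verts rot T" for T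
    proof -
      from Q_char[OF that] obtain w where w: "w \<in> D" "w \<in> v'" "T = F w" "s w = 3" by blast
      have "w \<in> {d', r1, r2}" using w(2) o(2) vd by simp
      moreover have "w \<noteq> d'" "w \<noteq> r1" using w(4) s56 by auto
      ultimately show ?thesis using w(3) by auto
    qed
    have "T0 = F r2" using qchar QT0 .
    hence tau: "tau D al rot S v' = F r2" using tau_eq[OF qchar] QT0 by simp
    have tri: "V ` F r2 = {v', V (al r1), V (al r2)}"
      using TRI[OF rD(1)] sr2 Vr by (simp add: r2_def)
    have "a \<in> {v', V (al r1), V (al r2)}" using ab(1) tau tri by auto
    moreover have "a \<noteq> V (al r1)" using notA1_56[OF ab(2) _ ] see1 s56(2) by metis
    moreover have "a \<noteq> V (al r2)" using notA1_56[OF ab(2)] see2 o(1) s56(1) by (metis r3_def)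
    ultimately show ?thesis using av by auto
  next
    case False
    hence n4: "card (V d') = 4" and sr: "s r2 = 3" "s r3 = 3" using deg by auto
    from orb4[OF perm_rot n4] have o: "rot r3 = d'" "V d' = {d', r1, r2, r3}"
      by (auto simp: r1_def r2_def r3_def)
    have qchar: "T = F r2 \<or> T = F r3" if "T \<in> Tset D al rot S \<and> v' \<in> face_verts rot T" for T
    proof -
      from Q_char[OF that] obtain w where w: "w \<in> D" "w \<in> v'" "T = F w" "s w = 3" by blast
      have "w \<in> {d', r1, r2, r3}" using w(2) o(2) vd by simp
      moreover have "w \<noteq> d'" "w \<noteq> r1" using w(4) s56 by auto
      ultimately show ?thesis using w(3) by auto
    qed
    have tri2: "V ` F r2 = {v', V (al r1), V (al r2)}"
      using TRI[OF rD(1)] sr Vr by (simp add: r2_def)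
    have tri3: "V ` F r3 = {v', V (al r2), V (al r3)}"
      using TRI[OF rD(2)] sr Vr by (simp add: r3_def)
    have see3': "s (al r3) = s d'" using see3 o(1) by simp
    show ?thesis
    proof (cases "F r2 \<in> Tset D al rot S \<and> F r3 \<in> Tset D al rot S")
      case True
      have "V (al r1) \<in> AA" using TSET_A[OF rD(1)] True sr nS1 by (simp add: r2_def)
      moreover have "V (al r3) \<in> AA" using TSET_A[OF rD(2)] True sr nS1 by (simp add: r3_def)
      ultimately show ?thesis using A_onS rD(3) o(1) by (auto simp: r1_def)
    next
      case False
      show ?thesis
      proof (cases "F r2 \<in> Tset D al rot S")
        case True
        hence n3: "F r3 \<notin> Tset D al rot S" using False by simp
        have q2: "F r2 \<in> Tset D al rot S \<and> v' \<in> face_verts rot (F r2)"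
          using QI[OF True, of d'] o(2) vd by simp
        have "T = F r2" if "T \<in> Tset D al rot S \<and> v' \<in> face_verts rot T" for T
          using qchar[OF that] that n3 by auto
        hence tau: "tau D al rot S v' = F r2" using tau_eq q2 by blast
        have "a \<noteq> V (al r1)" using notA1_56[OF ab(2) _ ] see1 s56(2) by metis
        hence "a = V (al r2)" using ab(1) tau tri2 av by auto
        hence "b = V (al r1)" using ab(1) tau tri2 av abn by auto
        hence "s r1 \<noteq> 5" using notA6_5[OF ab(3)] see1 by metis
        hence "s r1 = 6" "s d' = 5" using sz by (auto simp: r1_def)
        thus ?thesis using bS \<open>b = V (al r1)\<close> by (simp add: r1_def)
      next
        case False
        have q3: "F r3 \<in> Tset D al rot S"
          using qchar[OF QT0] QT0 False by auto
        have q3': "F r3 \<in> Tset D al rot S \<and> v' \<in> face_verts rot (F r3)"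
          using QI[OF q3, of d'] o(2) vd by simp
        have "T = F r3" if "T \<in> Tset D al rot S \<and> v' \<in> face_verts rot T" for T
          using qchar[OF that] that False by auto
        hence tau: "tau D al rot S v' = F r3" using tau_eq q3' by blast
        have "a \<noteq> V (al r3)" using notA1_56[OF ab(2) _ ] see3(1) see3' s56(1) by metis
        hence "a = V (al r2)" using ab(1) tau tri3 av by auto
        hence "b = V (al r3)" using ab(1) tau tri3 av abn by auto
        hence "s d' \<noteq> 5" using notA6_5[OF ab(3)] see3(1) see3' by metis
        hence "s d' = 6" "s r1 = 5" using sz by (auto simp: r1_def)
        thus ?thesis using bS \<open>b = V (al r3)\<close> rD(3) o(1) by (auto simp: r1_def)
      qed
    qed
  qed
qed



lemma main: assumes vC1: "v \<in> C1 D al rot S" and vD: "v \<in> Dset D al rot S"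
  shows "v \<in> C15 D al rot S"
proof -
  from vD obtain v' d where v'C: "v' \<in> C16 D al rot S" and dv: "d \<in> v" and dv': "al d \<in> v'"
    and ms: "{#s d, s (al d)#} = {#5, 6#}" and vverts: "v \<in> verts D rot"
    by (auto simp: Dset_def face_of_def fperm_def)
  from vverts obtain x0 where x0: "x0 \<in> D" "v = V x0" by (auto simp: verts_def vert_of_def)
  have dD: "d \<in> D" using VD[OF x0(1)] dv x0(2) by blast
  have Vd: "V d = v" using Vin[of d x0] dv x0(2) by simp
  have v'C1: "v' \<in> C1 D al rot S" using v'C by (simp add: C16_def)
  from v'C1 obtain y0 where y0: "y0 \<in> D" "v' = V y0" by (auto simp: C1_def verts_def vert_of_def)
  define d' where "d' = al d"
  have d'D: "d' \<in> D" using alD[OF dD] by (simp add: d'_def)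
  have Vd': "V d' = v'" using Vin[of d' y0] dv' y0(2) by (simp add: d'_def)
  have szd: "(s d = 5 \<and> s d' = 6) \<or> (s d = 6 \<and> s d' = 5)" using mset2[OF ms] by (simp add: d'_def)
  have srd: "s (rot d) = s d'" using F_al[OF dD] by (simp add: d'_def)
  have srd': "s (rot d') = s d" using F_al[OF d'D] alal[OF dD] by (simp add: d'_def)
  from C1_props[OF vC1] obtain T0 where nS: "\<not> onS v" and T0: "T0 \<in> Tset D al rot S" "v \<in> V ` T0" by blast
  have nS': "\<not> onS v'" using C1_props[OF v'C1] by blast
  have QT0: "T0 \<in> Tset D al rot S \<and> v \<in> face_verts rot T0" using T0 by (simp add: fverts)
  from Q_char[OF QT0] obtain t where t: "t \<in> D" "t \<in> v" "T0 = F t" "s t = 3" by blast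
  define e1 where "e1 = rot d"
  define e2 where "e2 = rot e1"
  define e3 where "e3 = rot e2"
  have eD: "e1 \<in> D" "e2 \<in> D" "e3 \<in> D" using dD by (simp_all add: e1_def e2_def e3_def rotD)
  have Ve: "V e1 = v" "V e2 = v" "V e3 = v" using Vd Vrot by (simp_all add: e1_def e2_def e3_def)
  have sz: "(s d = 5 \<and> s (rot d) = 6) \<or> (s d = 6 \<and> s (rot d) = 5)" using szd srd by simp
  have tV: "t \<in> V d" using t(2) Vd by simp
  from L56[OF dD sz tV t(4)]
  have deg: "(card (V d) = 3 \<and> s e2 = 3) \<or> (card (V d) = 4 \<and> s e2 = 3 \<and> s e3 = 3)"
    by (simp add: e1_def e2_def e3_def)
  have se1: "s e1 = s d'" using srd by (simp add: e1_def)
  have se2: "s e2 = 3" using deg by auto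
  have sz': "(s d' = 5 \<and> s (rot d') = 6) \<or> (s d' = 6 \<and> s (rot d') = 5)" using szd srd' by auto
  note vp = VP[OF v'C d'D Vd' sz']
  have nSe: "\<not> onS (V e1)" "\<not> onS (V e2)" using Ve nS by auto
  have V_e2a: "V (al e2) = V (al (rot e1))" by (simp add: e2_def)
  show ?thesis
  proof (cases "s d = 6")
    case True
    hence sd'5: "s d' = 5" using szd by auto
    have o2: "onS (V (al (rot d')))" using vp True srd' by simp
    have Kc: "\<not> onS (V (al pv))" if pv: "pv \<in> D" "rot pv = d" for pv
    proof
      assume o5: "onS (V (al pv))"
      have a: "rot (al (al pv)) = d" using alal[OF pv(1)] pv(2) by simp
      have b: "\<not> onS (V (rot (al d)))" using nS' Vd' Vrot[of d'] by (simp add: d'_def)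
      have c: "onS (V (rot (al (rot (al d)))))" using o2 Vrot[of "al (rot d')"] by (simp add: d'_def)
      show False using K[OF dD True alD[OF pv(1)] a _ b c o5] nS Vd by simp
    qed
    show ?thesis
    proof (cases "card (V d) = 3")
      case True
      from orb3[OF perm_rot True] have o: "rot e2 = d" "V d = {d, e1, e2}"
        by (auto simp: e1_def e2_def)
      have "t = e2" using tV o(2) t(4) \<open>s d = 6\<close> se1 sd'5 by auto
      hence "F (rot e1) \<in> Tset D al rot S" using T0(1) t(3) by (simp add: e2_def)
      hence "V (al (rot e1)) \<in> AA" using TSET_A[OF eD(1)] se2 nSe by (simp add: e2_def)
      hence "onS (V (al e2))" using A_onS by (simp add: e2_def)
      thus ?thesis using Kc[OF eD(2) o(1)] by simp
    next
      case False
      hence n4: "card (V d) = 4" and sr: "s e2 = 3" "s e3 = 3" using deg by auto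
      from orb4[OF perm_rot n4] have o: "rot e3 = d" "V d = {d, e1, e2, e3}"
        by (auto simp: e1_def e2_def e3_def)
      have k3: "\<not> onS (V (al e3))" using Kc[OF eD(3) o(1)] .
      have n3: "F e3 \<notin> Tset D al rot S"
      proof
        assume "F e3 \<in> Tset D al rot S"
        hence "V (al (rot e2)) \<in> AA" using TSET_A[OF eD(2)] sr nSe by (simp add: e3_def)
        thus False using k3 A_onS by (simp add: e3_def)
      qed
      have qchar: "T = F e2" if q: "T \<in> Tset D al rot S \<and> v \<in> face_verts rot T" for T
      proof -
        from Q_char[OF q] obtain w where w: "w \<in> D" "w \<in> v" "T = F w" "s w = 3" by blast
        have "w \<in> {d, e1, e2, e3}" using w(2) o(2) Vd by simp
        moreover have "w \<noteq> d" "w \<noteq> e1" using w(4) \<open>s d = 6\<close> se1 sd'5 by auto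
        moreover have "w \<noteq> e3" using n3 q w(3) by auto
        ultimately show ?thesis using w(3) by auto
      qed
      have q2: "F e2 \<in> Tset D al rot S \<and> v \<in> face_verts rot (F e2)" using qchar[OF QT0] QT0 by simp
      have tau: "tau D al rot S v = F e2" using tau_eq[OF qchar q2] .
      have AA2: "V (al e1) \<in> AA" "V (al e2) \<in> AA"
        using TSET_A[OF eD(1)] q2 sr nSe by (simp_all add: e2_def)
      have s1: "rot (al e1) \<in> V (al e1)" "s (rot (al e1)) = 5" using SEE[OF eD(1)] se1 sd'5 by auto
      have X5: "V (al e1) \<in> A5 D al rot S" using AA5[OF AA2(1) s1] .
      have s2: "al e2 \<in> V (al e2)" "rot (al e2) \<in> V (al e2)" "s (al e2) = 3" "s (rot (al e2)) = 3"
        "rot (al e2) \<noteq> al e2"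
        using SEE[OF eD(2)] sr by (auto simp: e3_def)
      have Y1: "V (al e2) \<in> A1 D al rot S" using AA1[OF AA2(2) s2(1,2) s2(5)[symmetric] s2(3,4)] .
      have tri: "V ` F e2 = {v, V (al e1), V (al e2)}"
        using TRI[OF eD(1)] sr Ve by (simp add: e2_def)
      have "face_verts rot (tau D al rot S v) = {v, V (al e2), V (al e1)}"
        using tau tri by (auto simp: fverts)
      thus ?thesis using vC1 X5 Y1 unfolding C15_def by blast
    qed
  next
    case False
    hence sd5: "s d = 5" and sd'6: "s d' = 6" using szd by auto
    from vp sd'6 obtain p where p: "p \<in> D" "rot p = d'" "onS (V (al p))" by blast
    have ke1: "\<not> onS (V (al e1))"
    proof
      assume o2: "onS (V (al e1))"
      have a: "rot (al (al p)) = d'" using alal[OF p(1)] p(2) by simp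
      have b: "\<not> onS (V (rot (al d')))" using nS Vd Vrot[of d] alal[OF dD] by (simp add: d'_def)
      have c: "onS (V (rot (al (rot (al d')))))" using o2 Vrot[of "al (rot d)"] alal[OF dD] by (simp add: d'_def e1_def)
      show False using K[OF d'D sd'6 alD[OF p(1)] a _ b c p(3)] nS' Vd' by simp
    qed
    show ?thesis
    proof (cases "card (V d) = 3")
      case True
      from orb3[OF perm_rot True] have o: "rot e2 = d" "V d = {d, e1, e2}"
        by (auto simp: e1_def e2_def)
      have "t = e2" using tV o(2) t(4) sd5 se1 sd'6 by auto
      hence "F (rot e1) \<in> Tset D al rot S" using T0(1) t(3) by (simp add: e2_def)
      hence "V (al e1) \<in> AA" using TSET_A[OF eD(1)] se2 nSe by (simp add: e2_def)
      thus ?thesis using A_onS ke1 by blast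
    next
      case False
      hence n4: "card (V d) = 4" and sr: "s e2 = 3" "s e3 = 3" using deg by auto
      from orb4[OF perm_rot n4] have o: "rot e3 = d" "V d = {d, e1, e2, e3}"
        by (auto simp: e1_def e2_def e3_def)
      have n2: "F e2 \<notin> Tset D al rot S"
      proof
        assume "F e2 \<in> Tset D al rot S"
        hence "V (al e1) \<in> AA" using TSET_A[OF eD(1)] sr nSe by (simp add: e2_def)
        thus False using ke1 A_onS by blast
      qed
      have qchar: "T = F e3" if q: "T \<in> Tset D al rot S \<and> v \<in> face_verts rot T" for T
      proof -
        from Q_char[OF q] obtain w where w: "w \<in> D" "w \<in> v" "T = F w" "s w = 3" by blast
        have "w \<in> {d, e1, e2, e3}" using w(2) o(2) Vd by simp
        moreover have "w \<noteq> d" "w \<noteq> e1" using w(4) sd5 se1 sd'6 by auto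
        moreover have "w \<noteq> e2" using n2 q w(3) by auto
        ultimately show ?thesis using w(3) by auto
      qed
      have q3: "F e3 \<in> Tset D al rot S \<and> v \<in> face_verts rot (F e3)" using qchar[OF QT0] QT0 by simp
      have tau: "tau D al rot S v = F e3" using tau_eq[OF qchar q3] .
      have AA3: "V (al e2) \<in> AA" "V (al e3) \<in> AA"
        using TSET_A[OF eD(2)] q3 sr nSe by (simp_all add: e3_def)
      have s3: "al e3 \<in> V (al e3)" "s (al e3) = 5" using SEE[OF eD(3)] o(1) sd5 by auto
      have Z5: "V (al e3) \<in> A5 D al rot S" using AA5[OF AA3(2) s3] .
      have s2: "al e2 \<in> V (al e2)" "rot (al e2) \<in> V (al e2)" "s (al e2) = 3" "s (rot (al e2)) = 3"
        "rot (al e2) \<noteq> al e2"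
        using SEE[OF eD(2)] sr by (auto simp: e3_def)
      have Y1: "V (al e2) \<in> A1 D al rot S" using AA1[OF AA3(1) s2(1,2) s2(5)[symmetric] s2(3,4)] .
      have tri: "V ` F e3 = {v, V (al e2), V (al e3)}"
        using TRI[OF eD(2)] sr Ve by (simp add: e3_def)
      have "face_verts rot (tau D al rot S v) = {v, V (al e2), V (al e3)}"
        using tau tri by (auto simp: fverts)
      thus ?thesis using vC1 Z5 Y1 unfolding C15_def by blast
    qed
  qed
qed

end

theorem lemma13p4:
  fixes D :: "'d set" and al rot :: "'d \<Rightarrow> 'd" and S :: "'d set"
  assumes "planar_PCC D al rot"
    and "S \<in> faces D al rot"
    and "card S \<ge> 42"
  shows "C1 D al rot S \<inter> Dset D al rot S \<subseteq> C15 D al rot S"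
proof -
  interpret pcc D al rot S using assms by unfold_locales
  show ?thesis using main by blast
qed

end
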